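(* Let $G$ be an undirected multigraph, $C\subseteq V(G)$ and $z\ge0$. If $G$ contains a $C$-certificate $H$ of order $z$, then $H$ contains (as a subgraph) a $C$-certificate $\hat H$ of order $z$ such that $\hat H-C$ has at most $\frac{|C|}{2}(z^2+2z-1)$ trees.
   Context: A feedback vertex set (FVS) of a multigraph $H$ is a set $X\subseteq V(H)$ with $H-X$ acyclic (self-loops and pairs of parallel edges count as cycles); $\mathrm{fvs}(H)$ is its minimum size. For $C\subseteq V(G)$, a $C$-certificate is a subgraph $H$ of $G$ such that $C$ is a minimum FVS of $H$; it has order $z$ if every connected component $H'$ of $H$ satisfies $\mathrm{fvs}(H')=|C\cap V(H')|\le z$. *)

theory Defs
  imports Main "HOL.Real"
begin

text \<open>Finite undirected multigraphs: edges are abstract identifiers; each edge has a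
set of one (self-loop) or two endpoints. Parallel edges are distinct identifiers with
the same endpoints.\<close>

record ('v, 'e) mgraph =
  verts :: "'v set"
  edges :: "'e set"
  ends  :: "'e \<Rightarrow> 'v set"

definition wf_mgraph :: "('v, 'e) mgraph \<Rightarrow> bool" where
  "wf_mgraph G \<longleftrightarrow> finite (verts G) \<and> finite (edges G) \<and>
     (\<forall>e\<in>edges G. ends G e \<subseteq> verts G \<and> 1 \<le> card (ends G e) \<and> card (ends G e) \<le> 2)"

definition subgraph :: "('v, 'e) mgraph \<Rightarrow> ('v, 'e) mgraph \<Rightarrow> bool" where
  "subgraph H G \<longleftrightarrow> wf_mgraph H \<and> verts H \<subseteq> verts G \<and> edges H \<subseteq> edges G \<and>
     (\<forall>e\<in>edges H. ends H e = ends G e)"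

definition delete_verts :: "('v, 'e) mgraph \<Rightarrow> 'v set \<Rightarrow> ('v, 'e) mgraph" where
  "delete_verts G X = \<lparr>verts = verts G - X, edges = {e\<in>edges G. ends G e \<inter> X = {}},
                        ends = ends G\<rparr>"

definition induce :: "('v, 'e) mgraph \<Rightarrow> 'v set \<Rightarrow> ('v, 'e) mgraph" where
  "induce G S = \<lparr>verts = S, edges = {e\<in>edges G. ends G e \<subseteq> S}, ends = ends G\<rparr>"

text \<open>A cycle: distinct vertices v_0..v_{k-1} (k>=1) and distinct edges e_0..e_{k-1}
with e_i joining v_i and v_{(i+1) mod k}. For k=1 this is a self-loop, for k=2 a pair
of parallel edges.\<close>
definition has_cycle :: "('v, 'e) mgraph \<Rightarrow> bool" where
  "has_cycle G \<longleftrightarrow> (\<exists>vs es. length vs = length es \<and> 1 \<le> length vs \<and>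
      distinct vs \<and> distinct es \<and> set vs \<subseteq> verts G \<and> set es \<subseteq> edges G \<and>
      (\<forall>i<length vs. ends G (es ! i) = {vs ! i, vs ! ((i + 1) mod length vs)}))"

definition acyclic_mg :: "('v, 'e) mgraph \<Rightarrow> bool" where
  "acyclic_mg G \<longleftrightarrow> \<not> has_cycle G"

definition is_fvs :: "('v, 'e) mgraph \<Rightarrow> 'v set \<Rightarrow> bool" where
  "is_fvs G X \<longleftrightarrow> X \<subseteq> verts G \<and> acyclic_mg (delete_verts G X)"

definition fvs :: "('v, 'e) mgraph \<Rightarrow> nat" where
  "fvs G = (LEAST k. \<exists>X. is_fvs G X \<and> card X = k)"

definition min_fvs :: "('v, 'e) mgraph \<Rightarrow> 'v set \<Rightarrow> bool" where
  "min_fvs G C \<longleftrightarrow> is_fvs G C \<and> card C = fvs G"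

definition adj :: "('v, 'e) mgraph \<Rightarrow> 'v \<Rightarrow> 'v \<Rightarrow> bool" where
  "adj G u v \<longleftrightarrow> (\<exists>e\<in>edges G. u \<in> ends G e \<and> v \<in> ends G e)"

definition components :: "('v, 'e) mgraph \<Rightarrow> 'v set set" where
  "components G = {{v \<in> verts G. (adj G)\<^sup>*\<^sup>* u v} | u. u \<in> verts G}"

definition certificate :: "('v, 'e) mgraph \<Rightarrow> 'v set \<Rightarrow> ('v, 'e) mgraph \<Rightarrow> bool" where
  "certificate G C H \<longleftrightarrow> subgraph H G \<and> min_fvs H C"

definition cert_order :: "('v, 'e) mgraph \<Rightarrow> 'v set \<Rightarrow> nat \<Rightarrow> bool" where
  "cert_order H C z \<longleftrightarrow> (\<forall>K\<in>components H.
      fvs (induce H K) = card (C \<inter> K) \<and> card (C \<inter> K) \<le> z)"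

end

theory Submission
  imports Defs
begin


definition is_cyc :: "('v, 'e) mgraph \<Rightarrow> 'v list \<Rightarrow> 'e list \<Rightarrow> bool" where
  "is_cyc G vs es \<longleftrightarrow> length vs = length es \<and> 1 \<le> length vs \<and>
      distinct vs \<and> distinct es \<and> set vs \<subseteq> verts G \<and> set es \<subseteq> edges G \<and>
      (\<forall>i<length vs. ends G (es ! i) = {vs ! i, vs ! ((i + 1) mod length vs)})"

lemma has_cycle_iff: "has_cycle G \<longleftrightarrow> (\<exists>vs es. is_cyc G vs es)"
  unfolding has_cycle_def is_cyc_def by blast

definition ppath :: "('v, 'e) mgraph \<Rightarrow> 'v list \<Rightarrow> 'e list \<Rightarrow> bool" where
  "ppath G vs es \<longleftrightarrow> vs \<noteq> [] \<and> length vs = Suc (length es) \<and> distinct vs \<and>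
     set vs \<subseteq> verts G \<and> set es \<subseteq> edges G \<and>
     (\<forall>i<length es. ends G (es ! i) = {vs ! i, vs ! Suc i})"

lemma ppath_distinct_es:
  assumes "ppath G vs es" shows "distinct es"
proof -
  { fix i j assume ij: "i < j" "j < length es" and eq: "es ! i = es ! j"
    have li: "length vs = Suc (length es)" "distinct vs" using assms by (auto simp: ppath_def)
    have "{vs ! i, vs ! Suc i} = {vs ! j, vs ! Suc j}" using assms ij eq
      by (metis order.strict_trans ppath_def)
    hence "vs ! i = vs ! j \<or> vs ! i = vs ! Suc j" by auto
    moreover have "vs ! i \<noteq> vs ! j" using li ij by (simp add: nth_eq_iff_index_eq)
    moreover have "vs ! i \<noteq> vs ! Suc j" using li ij by (simp add: nth_eq_iff_index_eq)
    ultimately have False by blast }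
  thus ?thesis unfolding distinct_conv_nth by (metis linorder_neqE_nat)
qed

lemma ppath_edge_ends:
  assumes "ppath G vs es" "e \<in> set es" shows "ends G e \<subseteq> set vs"
proof -
  obtain i where i: "i < length es" "e = es ! i" using assms(2) by (metis in_set_conv_nth)
  thus ?thesis using assms(1) unfolding ppath_def by auto
qed

lemma ppath_single: "v \<in> verts G \<Longrightarrow> ppath G [v] []"
  by (simp add: ppath_def)

lemma ppath_append:
  assumes p1: "ppath G vs1 es1" and p2: "ppath G vs2 es2"
    and dj: "set vs1 \<inter> set vs2 = {}" and e: "e \<in> edges G" "ends G e = {last vs1, hd vs2}"
  shows "ppath G (vs1 @ vs2) (es1 @ e # es2)"
proof -
  have l1: "length vs1 = Suc (length es1)" and l2: "length vs2 = Suc (length es2)"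
    and n1: "vs1 \<noteq> []" and n2: "vs2 \<noteq> []"
    using p1 p2 by (auto simp: ppath_def)
  have E1: "\<forall>i<length es1. ends G (es1 ! i) = {vs1 ! i, vs1 ! Suc i}" using p1 by (simp add: ppath_def)
  have E2: "\<forall>i<length es2. ends G (es2 ! i) = {vs2 ! i, vs2 ! Suc i}" using p2 by (simp add: ppath_def)
  have "ends G ((es1 @ e # es2) ! i) = {(vs1 @ vs2) ! i, (vs1 @ vs2) ! Suc i}"
    if i: "i < length (es1 @ e # es2)" for i
  proof -
    consider (a) "i < length es1" | (b) "i = length es1" | (c) j where "i = Suc (length es1) + j" "j < length es2"
      using i by (auto, metis add_Suc less_imp_Suc_add linorder_neqE_nat)
    thus ?thesis
    proof cases
      case a thus ?thesis using E1 l1 by (simp add: nth_append)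
    next
      case b thus ?thesis using e l1 n1 n2 by (simp add: nth_append last_conv_nth hd_conv_nth)
    next
      case c thus ?thesis using E2 l1 by (simp add: nth_append)
    qed
  qed
  thus ?thesis using p1 p2 dj e l1 l2 unfolding ppath_def by auto
qed

lemma ppath_take:
  assumes "ppath G vs es" "k < length vs"
  shows "ppath G (take (Suc k) vs) (take k es)"
  using assms unfolding ppath_def
  by (auto simp: distinct_take dest: in_set_takeD)

lemma ppath_rev:
  assumes "ppath G vs es" shows "ppath G (rev vs) (rev es)"
proof -
  have l: "length vs = Suc (length es)" using assms by (simp add: ppath_def)
  have E: "\<forall>i<length es. ends G (es ! i) = {vs ! i, vs ! Suc i}" using assms by (simp add: ppath_def)
  have "ends G (rev es ! i) = {rev vs ! i, rev vs ! Suc i}" if "i < length es" for i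
  proof -
    have "rev es ! i = es ! (length es - Suc i)" using that by (simp add: rev_nth)
    moreover have "rev vs ! i = vs ! Suc (length es - Suc i)" using that l by (simp add: rev_nth Suc_diff_Suc)
    moreover have "rev vs ! Suc i = vs ! (length es - Suc i)" using that l by (simp add: rev_nth)
    ultimately show ?thesis using E that by (simp add: insert_commute)
  qed
  thus ?thesis using assms l unfolding ppath_def by auto
qed

lemma ppath_close:
  assumes "ppath G vs es" "e \<in> edges G" "ends G e = {last vs, hd vs}" "e \<notin> set es"
  shows "is_cyc G vs (es @ [e])"
proof -
  have l: "length vs = Suc (length es)" and n: "vs \<noteq> []" using assms by (auto simp: ppath_def)
  have E: "\<forall>i<length es. ends G (es ! i) = {vs ! i, vs ! Suc i}" using assms by (simp add: ppath_def)
  have "ends G ((es @ [e]) ! i) = {vs ! i, vs ! ((i + 1) mod length vs)}" if "i < length vs" for i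
  proof (cases "i < length es")
    case True thus ?thesis using E l by (simp add: nth_append)
  next
    case False hence "i = length es" using that l by simp
    thus ?thesis using assms(3) l n by (simp add: nth_append last_conv_nth hd_conv_nth insert_commute)
  qed
  thus ?thesis using assms l ppath_distinct_es[OF assms(1)] unfolding is_cyc_def ppath_def by auto
qed

lemma adj_sym: "adj G u v = adj G v u"
  unfolding adj_def by blast

lemma adj_rtrancl_sym: "(adj G)\<^sup>*\<^sup>* u v \<Longrightarrow> (adj G)\<^sup>*\<^sup>* v u"
proof (induction rule: rtranclp_induct)
  case base thus ?case by simp
next
  case (step y z) thus ?case by (metis adj_sym converse_rtranclp_into_rtranclp)
qed

lemma ppath_reach:
  assumes "ppath G vs es" "x \<in> set vs" shows "(adj G)\<^sup>*\<^sup>* (hd vs) x"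
proof -
  have l: "length vs = Suc (length es)" and n: "vs \<noteq> []" using assms by (auto simp: ppath_def)
  have E: "\<forall>i<length es. ends G (es ! i) = {vs ! i, vs ! Suc i}" "set es \<subseteq> edges G"
    using assms by (auto simp: ppath_def)
  have "\<forall>i<length vs. (adj G)\<^sup>*\<^sup>* (hd vs) (vs ! i)"
  proof (intro allI impI)
    fix i assume "i < length vs"
    thus "(adj G)\<^sup>*\<^sup>* (hd vs) (vs ! i)"
    proof (induction i)
      case 0 thus ?case using n by (simp add: hd_conv_nth)
    next
      case (Suc i)
      have "i < length es" using Suc.prems l by simp
      hence "adj G (vs ! i) (vs ! Suc i)" using E unfolding adj_def
        by (metis insertI1 insert_commute nth_mem subsetD)
      thus ?case using Suc by (meson Suc_lessD rtranclp.rtrancl_into_rtrancl)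
    qed
  qed
  thus ?thesis using assms(2) by (metis in_set_conv_nth)
qed

lemma card2_ends:
  assumes "card A \<le> 2" "1 \<le> card A" "y \<in> A" "z \<in> A" "y \<noteq> z" shows "A = {y, z}"
proof -
  have f: "finite A" using assms(2) card.infinite by fastforce
  have "{y,z} \<subseteq> A" using assms by auto
  moreover have "card {y,z} = 2" using assms(5) by simp
  ultimately show ?thesis using card_subset_eq[OF f] assms(1)
    by (metis card_mono f le_antisym)
qed

lemma path_exists:
  assumes wf: "wf_mgraph G" and r: "(adj G)\<^sup>*\<^sup>* u v" and u: "u \<in> verts G"
  shows "\<exists>vs es. ppath G vs es \<and> hd vs = u \<and> last vs = v"
  using r
proof (induction rule: rtranclp_induct)
  case base thus ?case using u ppath_single by fastforce
next
  case (step y z)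
  then obtain vs es where p: "ppath G vs es" "hd vs = u" "last vs = y" by blast
  have n: "vs \<noteq> []" using p by (simp add: ppath_def)
  show ?case
  proof (cases "z \<in> set vs")
    case True
    then obtain k where k: "k < length vs" "vs ! k = z" by (metis in_set_conv_nth)
    have "ppath G (take (Suc k) vs) (take k es)" using ppath_take[OF p(1) k(1)] .
    moreover have "hd (take (Suc k) vs) = u" using p n by simp
    moreover have "last (take (Suc k) vs) = z" using k by (simp add: take_Suc_conv_app_nth)
    ultimately show ?thesis by blast
  next
    case False
    obtain e where e: "e \<in> edges G" "y \<in> ends G e" "z \<in> ends G e" using step(2) unfolding adj_def by blast
    have yz: "y \<noteq> z" using False p n by auto
    have ee: "ends G e = {y, z}" using wf e yz card2_ends unfolding wf_mgraph_def by metis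
    have zv: "z \<in> verts G" using wf e unfolding wf_mgraph_def by blast
    have "ppath G (vs @ [z]) (es @ e # [])"
      using ppath_append[OF p(1) ppath_single[OF zv]] False e ee p by auto
    thus ?thesis using p n by fastforce
  qed
qed



lemma delete_verts_simps[simp]:
  "verts (delete_verts G X) = verts G - X"
  "edges (delete_verts G X) = {e\<in>edges G. ends G e \<inter> X = {}}"
  "ends (delete_verts G X) = ends G"
  by (simp_all add: delete_verts_def)

lemma induce_simps[simp]:
  "verts (induce G S) = S"
  "edges (induce G S) = {e\<in>edges G. ends G e \<subseteq> S}"
  "ends (induce G S) = ends G"
  by (simp_all add: induce_def)

lemma cyc_edge_ends:
  assumes "is_cyc G vs es" "e \<in> set es" shows "ends G e \<subseteq> set vs"
proof -
  obtain i where i: "i < length es" "e = es ! i" using assms(2) by (metis in_set_conv_nth)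
  have "length vs = length es" "length vs \<ge> 1" using assms(1) by (auto simp: is_cyc_def)
  hence "(i + 1) mod length vs < length vs" by (intro mod_less_divisor) auto
  thus ?thesis using assms(1) i unfolding is_cyc_def by auto
qed

lemma cyc_ne: "is_cyc G vs es \<Longrightarrow> vs \<noteq> []"
  by (cases vs) (simp_all add: is_cyc_def)

lemma cyc_verts: "is_cyc G vs es \<Longrightarrow> set vs \<subseteq> verts G"
  by (simp add: is_cyc_def)

lemma cyc_mono:
  assumes "is_cyc G vs es" "set vs \<subseteq> verts G'" "set es \<subseteq> edges G'"
    "\<forall>e\<in>set es. ends G' e = ends G e"
  shows "is_cyc G' vs es"
  using assms unfolding is_cyc_def by (metis nth_mem)

lemma ppath_mono:
  assumes "ppath G vs es" "set vs \<subseteq> verts G'" "set es \<subseteq> edges G'"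
    "\<forall>e\<in>set es. ends G' e = ends G e"
  shows "ppath G' vs es"
  using assms unfolding ppath_def by (metis nth_mem)

lemma cyc_delete:
  assumes "is_cyc G vs es" "set vs \<inter> Y = {}" shows "is_cyc (delete_verts G Y) vs es"
proof -
  have "set es \<subseteq> edges G" using assms by (simp add: is_cyc_def)
  moreover have "\<forall>e\<in>set es. ends G e \<inter> Y = {}" using cyc_edge_ends[OF assms(1)] assms(2) by blast
  moreover have "set vs \<subseteq> verts G" using assms by (simp add: is_cyc_def)
  ultimately show ?thesis using assms by (intro cyc_mono[OF assms(1)]) auto
qed

lemma cyc_induce:
  assumes "is_cyc G vs es" "set vs \<subseteq> V" shows "is_cyc (induce G V) vs es"
proof -
  have "set es \<subseteq> edges G" using assms by (simp add: is_cyc_def)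
  moreover have "\<forall>e\<in>set es. ends G e \<subseteq> V" using cyc_edge_ends[OF assms(1)] assms(2) by blast
  ultimately show ?thesis using assms by (intro cyc_mono[OF assms(1)]) auto
qed

lemma cyc_from_delete:
  assumes "is_cyc (delete_verts G Y) vs es" shows "is_cyc G vs es" "set vs \<inter> Y = {}"
proof -
  show "is_cyc G vs es" by (rule cyc_mono[OF assms]) (use assms in \<open>auto simp: is_cyc_def\<close>)
  show "set vs \<inter> Y = {}" using assms by (auto simp: is_cyc_def)
qed

lemma cyc_from_induce:
  assumes "is_cyc (induce G V) vs es" "V \<subseteq> verts G" shows "is_cyc G vs es" "set vs \<subseteq> V"
proof -
  show "is_cyc G vs es" by (rule cyc_mono[OF assms(1)]) (use assms in \<open>auto simp: is_cyc_def\<close>)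
  show "set vs \<subseteq> V" using assms by (auto simp: is_cyc_def)
qed

lemma cyc_reach:
  assumes "is_cyc G vs es" "x \<in> set vs" shows "(adj G)\<^sup>*\<^sup>* (vs ! 0) x"
proof -
  have l: "length vs = length es" "set es \<subseteq> edges G"
    and E: "\<forall>i<length vs. ends G (es ! i) = {vs ! i, vs ! ((i + 1) mod length vs)}"
    using assms by (auto simp: is_cyc_def)
  have "\<forall>i<length vs. (adj G)\<^sup>*\<^sup>* (vs ! 0) (vs ! i)"
  proof (intro allI impI)
    fix i assume "i < length vs"
    thus "(adj G)\<^sup>*\<^sup>* (vs ! 0) (vs ! i)"
    proof (induction i)
      case 0 thus ?case by simp
    next
      case (Suc i)
      have i: "i < length vs" using Suc.prems by simp
      hence "ends G (es ! i) = {vs ! i, vs ! Suc i}" using E Suc.prems by simp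
      hence "adj G (vs ! i) (vs ! Suc i)" using l i unfolding adj_def
        by (metis insertI1 insert_commute nth_mem subsetD)
      thus ?case using Suc i by (meson rtranclp.rtrancl_into_rtrancl)
    qed
  qed
  thus ?thesis using assms(2) by (metis in_set_conv_nth)
qed

lemma wf_delete: "wf_mgraph G \<Longrightarrow> wf_mgraph (delete_verts G X)"
  unfolding wf_mgraph_def by auto

lemma wf_induce: "wf_mgraph G \<Longrightarrow> V \<subseteq> verts G \<Longrightarrow> wf_mgraph (induce G V)"
  unfolding wf_mgraph_def by (auto intro: finite_subset)

lemma adj_mono:
  assumes "edges G \<subseteq> edges G'" "\<forall>e\<in>edges G. ends G' e = ends G e"
  shows "(adj G)\<^sup>*\<^sup>* u v \<Longrightarrow> (adj G')\<^sup>*\<^sup>* u v"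
proof -
  have "adj G \<le> adj G'" using assms unfolding adj_def by fastforce
  thus "(adj G)\<^sup>*\<^sup>* u v \<Longrightarrow> (adj G')\<^sup>*\<^sup>* u v" using rtranclp_mono by blast
qed

definition compof :: "('v, 'e) mgraph \<Rightarrow> 'v \<Rightarrow> 'v set" where
  "compof G u = {v \<in> verts G. (adj G)\<^sup>*\<^sup>* u v}"

lemma components_eq: "components G = compof G ` verts G"
  unfolding components_def compof_def by auto

lemma compof_self: "u \<in> verts G \<Longrightarrow> u \<in> compof G u"
  unfolding compof_def by simp

lemma compof_eq: "v \<in> compof G u \<Longrightarrow> compof G v = compof G u"
proof -
  assume "v \<in> compof G u"
  hence uv: "(adj G)\<^sup>*\<^sup>* u v" "(adj G)\<^sup>*\<^sup>* v u" unfolding compof_def using adj_rtrancl_sym by auto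
  show ?thesis unfolding compof_def using uv rtranclp_trans[of "adj G"] by blast
qed

lemma comp_eq: "K \<in> components G \<Longrightarrow> u \<in> K \<Longrightarrow> K = compof G u"
  unfolding components_eq using compof_eq by fastforce

lemma comp_disj: "K1 \<in> components G \<Longrightarrow> K2 \<in> components G \<Longrightarrow> x \<in> K1 \<Longrightarrow> x \<in> K2 \<Longrightarrow> K1 = K2"
  using comp_eq by metis

lemma comp_sub: "K \<in> components G \<Longrightarrow> K \<subseteq> verts G"
  unfolding components_eq compof_def by auto

lemma compof_in: "u \<in> verts G \<Longrightarrow> compof G u \<in> components G"
  unfolding components_eq by simp

lemma finite_components: "finite (verts G) \<Longrightarrow> finite (components G)"
  unfolding components_eq by simp

lemma card_comp_sum:
  assumes "finite (verts G)" "A \<subseteq> verts G"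
  shows "card A = (\<Sum>K\<in>components G. card (A \<inter> K))"
proof -
  have "A = (\<Union>K\<in>components G. A \<inter> K)"
    using assms(2) compof_self compof_in by fastforce
  moreover have "card (\<Union>K\<in>components G. A \<inter> K) = (\<Sum>K\<in>components G. card (A \<inter> K))"
  proof (rule card_UN_disjoint)
    show "finite (components G)" using finite_components assms by blast
    show "\<forall>K\<in>components G. finite (A \<inter> K)" using assms finite_subset by blast
    show "\<forall>i\<in>components G. \<forall>j\<in>components G. i \<noteq> j \<longrightarrow> A \<inter> i \<inter> (A \<inter> j) = {}"
      using comp_disj by (auto dest: comp_disj)
  qed
  ultimately show ?thesis by simp
qed



lemma fvs_le: "is_fvs G X \<Longrightarrow> fvs G \<le> card X"
  unfolding fvs_def by (rule Least_le) blast

lemma fvs_ex: "is_fvs G X \<Longrightarrow> \<exists>Z. is_fvs G Z \<and> card Z = fvs G"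
  unfolding fvs_def by (rule LeastI_ex) blast

lemma min_fvs_comp:
  assumes wf: "wf_mgraph G" and m: "min_fvs G C" and K: "K \<in> components G"
  shows "fvs (induce G K) = card (C \<inter> K)"
proof -
  have fC: "is_fvs G C" "card C = fvs G" using m by (auto simp: min_fvs_def)
  have Cv: "C \<subseteq> verts G" and acC: "\<not> has_cycle (delete_verts G C)"
    using fC by (auto simp: is_fvs_def acyclic_mg_def)
  have fV: "finite (verts G)" using wf by (simp add: wf_mgraph_def)
  have finC: "finite C" using Cv fV finite_subset by blast
  have KV: "K \<subseteq> verts G" using comp_sub K by blast
  have f1: "is_fvs (induce G K) (C \<inter> K)"
  proof -
    { assume "has_cycle (delete_verts (induce G K) (C \<inter> K))"
      then obtain vs es where c: "is_cyc (delete_verts (induce G K) (C \<inter> K)) vs es"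
        by (auto simp: has_cycle_iff)
      have c1: "is_cyc (induce G K) vs es" "set vs \<inter> (C \<inter> K) = {}" using cyc_from_delete[OF c] by auto
      have c2: "is_cyc G vs es" "set vs \<subseteq> K" using cyc_from_induce[OF c1(1) KV] by auto
      have "set vs \<inter> C = {}" using c1 c2 by blast
      hence "is_cyc (delete_verts G C) vs es" using cyc_delete c2 by blast
      hence False using acC by (auto simp: has_cycle_iff) }
    thus ?thesis unfolding is_fvs_def acyclic_mg_def by auto
  qed
  have le: "fvs (induce G K) \<le> card (C \<inter> K)" using fvs_le[OF f1] .
  obtain Z where Z: "is_fvs (induce G K) Z" "card Z = fvs (induce G K)" using fvs_ex[OF f1] by blast
  have ZK: "Z \<subseteq> K" using Z by (simp add: is_fvs_def)
  have acZ: "\<not> has_cycle (delete_verts (induce G K) Z)" using Z by (simp add: is_fvs_def acyclic_mg_def)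
  show ?thesis
  proof (rule ccontr)
    assume "fvs (induce G K) \<noteq> card (C \<inter> K)"
    hence lt: "card Z < card (C \<inter> K)" using le Z by simp
    define Y where "Y = (C - K) \<union> Z"
    have fY: "is_fvs G Y"
    proof -
      { assume "has_cycle (delete_verts G Y)"
        then obtain vs es where c: "is_cyc (delete_verts G Y) vs es" by (auto simp: has_cycle_iff)
        have c1: "is_cyc G vs es" "set vs \<inter> Y = {}" using cyc_from_delete[OF c] by auto
        have n: "vs \<noteq> []" using cyc_ne[OF c1(1)] .
        have "vs ! 0 \<in> set vs" using n by simp
        moreover have sv: "set vs \<subseteq> verts G" using cyc_verts[OF c1(1)] .
        ultimately have v0: "vs ! 0 \<in> verts G" by (rule subsetD[rotated])
        have inK0: "set vs \<subseteq> compof G (vs ! 0)"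
        proof
          fix x assume x: "x \<in> set vs"
          have "(adj G)\<^sup>*\<^sup>* (vs ! 0) x" using cyc_reach[OF c1(1) x] .
          thus "x \<in> compof G (vs ! 0)" unfolding compof_def using x sv by auto
        qed
        have False
        proof (cases "vs ! 0 \<in> K")
          case True
          hence "compof G (vs ! 0) = K" using comp_eq[OF K] by (rule_tac sym) blast
          hence "set vs \<subseteq> K" using inK0 by simp
          hence "is_cyc (induce G K) vs es" using cyc_induce c1 by blast
          moreover have "set vs \<inter> Z = {}" using c1 Y_def by auto
          ultimately have "is_cyc (delete_verts (induce G K) Z) vs es" using cyc_delete by blast
          thus False using acZ by (auto simp: has_cycle_iff)
        next
          case False
          have "compof G (vs ! 0) \<inter> K = {}"
            using comp_disj[OF compof_in[OF v0] K] compof_self[OF v0] False by blast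
          hence "set vs \<inter> C = {}" using inK0 c1 Y_def by blast
          hence "is_cyc (delete_verts G C) vs es" using cyc_delete c1 by blast
          thus False using acC by (auto simp: has_cycle_iff)
        qed }
      moreover have "Y \<subseteq> verts G" using Y_def Cv ZK KV by auto
      ultimately show ?thesis unfolding is_fvs_def acyclic_mg_def by auto
    qed
    have ZV: "Z \<subseteq> verts G" using ZK KV by (rule subset_trans)
    have finZ: "finite Z" by (rule finite_subset[OF ZV fV])
    have "card Y \<le> card (C - K) + card Z" unfolding Y_def by (rule card_Un_le)
    also have "\<dots> < card (C - K) + card (C \<inter> K)" using lt by simp
    also have "\<dots> = card C" using card_Int_Diff[OF finC, of K] by linarith
    finally have "card Y < fvs G" using fC(2) by linarith
    thus False using fvs_le[OF fY] by simp
  qed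
qed

lemma tree_path:
  assumes wf: "wf_mgraph H" and T: "T \<in> components (delete_verts H C)" and p: "p \<in> T" and q: "q \<in> T"
  shows "\<exists>vs es. ppath H vs es \<and> hd vs = p \<and> last vs = q \<and> set vs \<subseteq> T"
proof -
  let ?F = "delete_verts H C"
  have wfF: "wf_mgraph ?F" using wf_delete[OF wf] .
  have Tp: "T = compof ?F p" using comp_eq[OF T p] .
  hence r: "(adj ?F)\<^sup>*\<^sup>* p q" and pv: "p \<in> verts ?F" using q p unfolding compof_def by auto
  obtain vs es where pp: "ppath ?F vs es" "hd vs = p" "last vs = q" using path_exists[OF wfF r pv] by blast
  have "set vs \<subseteq> T" using ppath_reach[OF pp(1)] pp(1) pp(2) Tp unfolding compof_def ppath_def by auto
  moreover have "ppath H vs es" using pp(1) by (rule ppath_mono) (use pp(1) in \<open>auto simp: ppath_def\<close>)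
  ultimately show ?thesis using pp by blast
qed

definition att :: "('v, 'e) mgraph \<Rightarrow> 'v set \<Rightarrow> 'v \<Rightarrow> 'v \<Rightarrow> bool" where
  "att H T c d \<longleftrightarrow> (\<exists>e1\<in>edges H. \<exists>e2\<in>edges H. e1 \<noteq> e2 \<and>
     (\<exists>p1\<in>T. \<exists>p2\<in>T. ends H e1 = {c, p1} \<and> ends H e2 = {d, p2}))"

lemma att_sym: "att H T c d \<Longrightarrow> att H T d c"
  unfolding att_def by metis

lemma tree_disjC: "T \<in> components (delete_verts H C) \<Longrightarrow> T \<inter> C = {}"
  using comp_sub by fastforce

lemma tree_verts: "T \<in> components (delete_verts H C) \<Longrightarrow> T \<subseteq> verts H"
  using comp_sub by fastforce

lemma loop_cycle:
  assumes wf: "wf_mgraph H" and CV: "C \<subseteq> verts H" and T: "T \<in> components (delete_verts H C)"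
    and c: "c \<in> C" and a: "att H T c c"
  shows "\<exists>vs es. is_cyc H vs es \<and> set vs \<subseteq> insert c T"
proof -
  obtain e1 e2 p1 p2 where e: "e1 \<in> edges H" "e2 \<in> edges H" "e1 \<noteq> e2" "p1 \<in> T" "p2 \<in> T"
    "ends H e1 = {c, p1}" "ends H e2 = {c, p2}" using a unfolding att_def by blast
  obtain vs es where pp: "ppath H vs es" "hd vs = p1" "last vs = p2" "set vs \<subseteq> T"
    using tree_path[OF wf T e(4) e(5)] by blast
  have cT: "c \<notin> T" using tree_disjC[OF T] c by blast
  have n: "vs \<noteq> []" using pp by (simp add: ppath_def)
  have p1: "ppath H ([c] @ vs) ([] @ e1 # es)"
    by (rule ppath_append[OF ppath_single pp(1)]) (use CV c cT pp e in auto)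
  have e2n: "e2 \<notin> set es" using ppath_edge_ends[OF pp(1)] e(7) pp(4) cT by blast
  have CC: "is_cyc H ([c] @ vs) (([] @ e1 # es) @ [e2])"
    by (intro ppath_close[OF p1 e(2)]) (use e pp n e2n in \<open>auto simp: insert_commute\<close>)
  have SS: "set ([c] @ vs) \<subseteq> insert c T" using pp(4) by auto
  show ?thesis by (rule exI, rule exI, rule conjI, rule CC, rule SS)
qed

lemma pair_cycle:
  assumes wf: "wf_mgraph H" and CV: "C \<subseteq> verts H"
    and Ta: "Ta \<in> components (delete_verts H C)" and Tb: "Tb \<in> components (delete_verts H C)"
    and dj: "Ta \<inter> Tb = {}" and cd: "c \<noteq> d" "c \<in> C" "d \<in> C"
    and aa: "att H Ta c d" and ab: "att H Tb c d"
  shows "\<exists>vs es. is_cyc H vs es \<and> set vs \<subseteq> {c, d} \<union> Ta \<union> Tb"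
proof -
  obtain e1a e2a p1a p2a where ea: "e1a \<in> edges H" "e2a \<in> edges H" "e1a \<noteq> e2a" "p1a \<in> Ta" "p2a \<in> Ta"
    "ends H e1a = {c, p1a}" "ends H e2a = {d, p2a}" using aa unfolding att_def by blast
  obtain e1b e2b p1b p2b where eb: "e1b \<in> edges H" "e2b \<in> edges H" "e1b \<noteq> e2b" "p1b \<in> Tb" "p2b \<in> Tb"
    "ends H e1b = {c, p1b}" "ends H e2b = {d, p2b}" using ab unfolding att_def by blast
  obtain vsa esa where pa: "ppath H vsa esa" "hd vsa = p1a" "last vsa = p2a" "set vsa \<subseteq> Ta"
    using tree_path[OF wf Ta ea(4) ea(5)] by blast
  obtain vsb esb where pb: "ppath H vsb esb" "hd vsb = p1b" "last vsb = p2b" "set vsb \<subseteq> Tb"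
    using tree_path[OF wf Tb eb(4) eb(5)] by blast
  have cT: "c \<notin> Ta" "c \<notin> Tb" "d \<notin> Ta" "d \<notin> Tb" using tree_disjC[OF Ta] tree_disjC[OF Tb] cd by auto
  have na: "vsa \<noteq> []" using pa by (simp add: ppath_def)
  have nb: "vsb \<noteq> []" using pb by (simp add: ppath_def)
  have w1: "ppath H ([c] @ vsa) ([] @ e1a # esa)"
    by (rule ppath_append[OF ppath_single pa(1)]) (use CV cd cT pa ea in auto)
  have w2: "ppath H (([c] @ vsa) @ [d]) (([] @ e1a # esa) @ e2a # [])"
    by (rule ppath_append[OF w1 ppath_single]) (use CV cd cT pa ea na in \<open>auto simp: insert_commute\<close>)
  have rb: "ppath H (rev vsb) (rev esb)" using ppath_rev[OF pb(1)] .
  have w3: "ppath H ((([c] @ vsa) @ [d]) @ rev vsb) ((([] @ e1a # esa) @ [e2a]) @ e2b # rev esb)"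
    by (rule ppath_append[OF w2 rb]) (use CV cd cT pa pb eb dj nb in \<open>auto simp: hd_rev\<close>)
  have x1: "e1b \<noteq> e1a"
  proof
    assume "e1b = e1a" hence "p1b \<in> {c, p1a}" using ea(6) eb(6) by auto
    thus False using cT eb(4) ea(4) dj by auto
  qed
  have x2: "e1b \<noteq> e2a" using ea(7) eb(6) cd cT ea(5) by (metis insertCI insertE singletonD)
  have x3: "e1b \<notin> set esa" using ppath_edge_ends[OF pa(1)] eb(6) pa(4) cT by blast
  have x4: "e1b \<notin> set esb" using ppath_edge_ends[OF pb(1)] eb(6) pb(4) cT by blast
  have CC: "is_cyc H ((([c] @ vsa) @ [d]) @ rev vsb) (((([] @ e1a # esa) @ [e2a]) @ e2b # rev esb) @ [e1b])"
    by (intro ppath_close[OF w3 eb(1)]) (use eb pb nb x1 x2 x3 x4 in \<open>auto simp: insert_commute last_rev\<close>)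
  have SS: "set ((([c] @ vsa) @ [d]) @ rev vsb) \<subseteq> {c, d} \<union> Ta \<union> Tb" using pa(4) pb(4) by auto
  show ?thesis by (rule exI, rule exI, rule conjI, rule CC, rule SS)
qed

lemma crossing:
  assumes "a < n" "b < n" "Q a" "\<not> Q b"
  shows "\<exists>i<n. Q i \<and> \<not> Q (Suc i mod n)"
proof (rule ccontr)
  assume "\<not> ?thesis"
  hence st: "\<forall>i<n. Q i \<longrightarrow> Q (Suc i mod n)" by blast
  have "Q ((a + m) mod n)" for m
  proof (induction m)
    case 0 thus ?case using assms by simp
  next
    case (Suc m)
    have "(a + Suc m) mod n = Suc ((a + m) mod n) mod n" by (simp add: mod_Suc_eq)
    moreover have "(a + m) mod n < n" using assms by simp
    ultimately show ?case using st Suc by simp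
  qed
  from this[of "b + n - a"] have "Q ((b + n) mod n)" using assms by simp
  thus False using assms by simp
qed



lemma cyc_edge:
  assumes "is_cyc G vs es" "k < length vs"
  shows "es ! k \<in> edges G" "ends G (es ! k) = {vs ! k, vs ! (Suc k mod length vs)}"
    "length es = length vs" "distinct es"
proof -
  have l: "length es = length vs" using assms(1) by (simp add: is_cyc_def)
  have se: "set es \<subseteq> edges G" using assms(1) by (simp add: is_cyc_def)
  show "es ! k \<in> edges G" using se l assms(2) nth_mem[of k es] by auto
  show "ends G (es ! k) = {vs ! k, vs ! (Suc k mod length vs)}" using assms unfolding is_cyc_def by simp
  show "length es = length vs" using l .
  show "distinct es" using assms(1) by (simp add: is_cyc_def)
qed

lemma reach_step:
  assumes "u \<in> compof G w" "e \<in> edges G" "u \<in> ends G e" "x \<in> ends G e" "x \<in> verts G"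
  shows "x \<in> compof G w"
proof -
  have "adj G u x" using assms unfolding adj_def by blast
  moreover have "(adj G)\<^sup>*\<^sup>* w u" using assms(1) unfolding compof_def by simp
  ultimately have "(adj G)\<^sup>*\<^sup>* w x" by (rule rtranclp.rtrancl_into_rtrancl[rotated])
  thus ?thesis using assms(5) unfolding compof_def by simp
qed

lemma att_comp:
  assumes wf: "wf_mgraph H" and T: "T \<in> components (delete_verts H C)" and a: "att H T c d"
  shows "T \<subseteq> compof H c" "d \<in> compof H c"
proof -
  obtain e1 e2 p1 p2 where e: "e1 \<in> edges H" "e2 \<in> edges H" "p1 \<in> T" "p2 \<in> T"
    "ends H e1 = {c, p1}" "ends H e2 = {d, p2}" using a unfolding att_def by blast
  have endsV: "\<And>e. e \<in> edges H \<Longrightarrow> ends H e \<subseteq> verts H" using wf unfolding wf_mgraph_def by blast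
  have cV: "c \<in> verts H" using endsV[OF e(1)] e(5) by blast
  have dV: "d \<in> verts H" using endsV[OF e(2)] e(6) by blast
  have cc: "c \<in> compof H c" using compof_self[OF cV] .
  have p1c: "p1 \<in> compof H c" using reach_step[OF cc e(1)] e(5) endsV[OF e(1)] by blast
  have Tp: "T = compof (delete_verts H C) p1" using comp_eq[OF T e(3)] .
  have TV: "T \<subseteq> verts H" using tree_verts[OF T] .
  show TS: "T \<subseteq> compof H c"
  proof
    fix w assume w: "w \<in> T"
    hence "(adj (delete_verts H C))\<^sup>*\<^sup>* p1 w" using Tp unfolding compof_def by blast
    hence "(adj H)\<^sup>*\<^sup>* p1 w" by (rule adj_mono[rotated 2]) auto
    moreover have "(adj H)\<^sup>*\<^sup>* c p1" using p1c unfolding compof_def by simp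
    ultimately have "(adj H)\<^sup>*\<^sup>* c w" by (rule rtranclp_trans[rotated])
    thus "w \<in> compof H c" using w TV unfolding compof_def by blast
  qed
  have "p2 \<in> compof H c" using TS e(4) by blast
  thus "d \<in> compof H c" using reach_step[OF _ e(2)] e(6) dV by blast
qed



theorem lemma13:
  fixes G H :: "('v, 'e) mgraph" and C :: "'v set" and z :: nat
  assumes "wf_mgraph G"
    and "C \<subseteq> verts G"
    and "certificate G C H"
    and "cert_order H C z"
  shows "\<exists>H'. subgraph H' H \<and> certificate G C H' \<and> cert_order H' C z \<and>
           real (card {T \<in> components (delete_verts H' C). acyclic_mg (induce (delete_verts H' C) T)})
             \<le> real (card C) / 2 * ((real z)\<^sup>2 + 2 * real z - 1)"
proof -
  have subH: "subgraph H G" and mH: "min_fvs H C" using assms(3) by (auto simp: certificate_def)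
  have wfH: "wf_mgraph H" using subH by (simp add: subgraph_def)
  have fvH: "finite (verts H)" using wfH by (simp add: wf_mgraph_def)
  have isC: "is_fvs H C" and cardC: "card C = fvs H" using mH by (auto simp: min_fvs_def)
  have CV: "C \<subseteq> verts H" using isC by (simp add: is_fvs_def)
  have finC: "finite C" by (rule finite_subset[OF CV fvH])
  define F where "F = delete_verts H C"
  have acF: "\<not> has_cycle F" using isC by (simp add: is_fvs_def acyclic_mg_def F_def)
  have wfF: "wf_mgraph F" unfolding F_def by (rule wf_delete[OF wfH])
  define Tr where "Tr = components F"
  have finTr: "finite Tr" unfolding Tr_def F_def by (rule finite_components) (use fvH in simp)
  have TrV: "\<And>T. T \<in> Tr \<Longrightarrow> T \<subseteq> verts H" unfolding Tr_def F_def by (rule tree_verts)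
  have TrC: "\<And>T. T \<in> Tr \<Longrightarrow> T \<inter> C = {}" unfolding Tr_def F_def by (rule tree_disjC)
  have co: "\<And>K. K \<in> components H \<Longrightarrow> fvs (induce H K) = card (C \<inter> K) \<and> card (C \<inter> K) \<le> z"
    using assms(4) unfolding cert_order_def by blast
  define PP where "PP = {P. \<exists>a\<in>C. \<exists>b\<in>C. P = {a, b}}"
  define A where "A P = {T \<in> Tr. \<exists>c d. P = {c, d} \<and> att H T c d}" for P
  define N where "N P = card (C \<inter> compof H (SOME c. c \<in> P)) + card P - 1" for P
  have finA: "finite (A P)" for P unfolding A_def using finTr by simp
  have exB: "\<forall>P. \<exists>B. B \<subseteq> A P \<and> card B = min (card (A P)) (N P)"
  proof
    fix P
    have "min (card (A P)) (N P) \<le> card (A P)" by simp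
    then obtain B where "B \<subseteq> A P" "card B = min (card (A P)) (N P)" by (rule obtain_subset_with_card_n)
    thus "\<exists>B. B \<subseteq> A P \<and> card B = min (card (A P)) (N P)" by blast
  qed
  obtain B where BA: "\<And>P. B P \<subseteq> A P" and Bc: "\<And>P. card (B P) = min (card (A P)) (N P)"
    using choice[OF exB] by blast
  define S where "S = (\<Union>P\<in>PP. B P)"
  define V where "V = C \<union> \<Union>S"
  define H' where "H' = induce H V"
  have finPP: "finite PP"
  proof (rule finite_subset[of _ "Pow C"])
    show "PP \<subseteq> Pow C" unfolding PP_def by auto
  qed (use finC in simp)
  have STr: "S \<subseteq> Tr" unfolding S_def using BA A_def by blast
  have finS: "finite S" by (rule finite_subset[OF STr finTr])
  have VV: "V \<subseteq> verts H" unfolding V_def using CV STr TrV by blast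
  have wfH': "wf_mgraph H'" unfolding H'_def by (rule wf_induce[OF wfH VV])
  have noQ: "\<And>Y ws fs. is_cyc H ws fs \<Longrightarrow> set ws \<subseteq> V \<Longrightarrow> set ws \<inter> Y = {} \<Longrightarrow> has_cycle (delete_verts H' Y)"
  proof -
    fix Y ws fs assume a: "is_cyc H ws fs" "set ws \<subseteq> V" "set ws \<inter> Y = {}"
    have "is_cyc (induce H V) ws fs" using cyc_induce[OF a(1,2)] .
    hence "is_cyc (delete_verts H' Y) ws fs" unfolding H'_def using cyc_delete a(3) by blast
    thus "has_cycle (delete_verts H' Y)" using has_cycle_iff by blast
  qed
  have mainclaim: "card C \<le> card Y" if fY: "is_fvs H' Y" for Y
  proof (rule ccontr)
    assume "\<not> card C \<le> card Y"
    hence lt: "card Y < card C" by simp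
    have YV: "Y \<subseteq> V" using fY unfolding is_fvs_def H'_def by simp
    have acY: "\<not> has_cycle (delete_verts H' Y)" using fY unfolding is_fvs_def acyclic_mg_def by simp
    have YH: "Y \<subseteq> verts H" using YV VV by (rule subset_trans)
    have "\<exists>K\<in>components H. card (Y \<inter> K) < card (C \<inter> K)"
    proof (rule ccontr)
      assume "\<not> ?thesis"
      hence le: "\<And>K. K \<in> components H \<Longrightarrow> card (C \<inter> K) \<le> card (Y \<inter> K)" by (simp add: not_less)
      have "card C = (\<Sum>K\<in>components H. card (C \<inter> K))" by (rule card_comp_sum[OF fvH CV])
      also have "\<dots> \<le> (\<Sum>K\<in>components H. card (Y \<inter> K))" using le by (rule sum_mono)
      also have "\<dots> = card Y" by (rule card_comp_sum[OF fvH YH, symmetric])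
      finally show False using lt by simp
    qed
    then obtain K where K: "K \<in> components H" "card (Y \<inter> K) < card (C \<inter> K)" by blast
    have KV: "K \<subseteq> verts H" using comp_sub[OF K(1)] .
    have coK: "fvs (induce H K) = card (C \<inter> K)" using co[OF K(1)] by blast
    have "\<not> is_fvs (induce H K) (Y \<inter> K)"
    proof
      assume "is_fvs (induce H K) (Y \<inter> K)"
      hence "fvs (induce H K) \<le> card (Y \<inter> K)" by (rule fvs_le)
      thus False using coK K(2) by simp
    qed
    hence "has_cycle (delete_verts (induce H K) (Y \<inter> K))" unfolding is_fvs_def acyclic_mg_def by simp
    then obtain vs es where q0: "is_cyc (delete_verts (induce H K) (Y \<inter> K)) vs es" using has_cycle_iff by blast
    have q1: "is_cyc (induce H K) vs es" "set vs \<inter> (Y \<inter> K) = {}" using cyc_from_delete[OF q0] by auto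
    have q: "is_cyc H vs es" "set vs \<subseteq> K" using cyc_from_induce[OF q1(1) KV] by auto
    have qY: "set vs \<inter> Y = {}" using q1(2) q(2) by blast
    have qV: "set vs \<subseteq> verts H" using cyc_verts[OF q(1)] .
    show False
    proof (cases "set vs \<subseteq> V")
      case True
      have "has_cycle (delete_verts H' Y)" by (rule noQ[OF q(1) True qY])
      thus False using acY by simp
    next
      case False
      then obtain v where v: "v \<in> set vs" "v \<notin> V" by blast
      have vC: "v \<notin> C" using v(2) unfolding V_def by blast
      have vF: "v \<in> verts F" using v(1) qV vC unfolding F_def by auto
      define T where "T = compof F v"
      have TTr: "T \<in> Tr" unfolding T_def Tr_def by (rule compof_in[OF vF])
      have vT: "v \<in> T" unfolding T_def by (rule compof_self[OF vF])
      have TC: "T \<inter> C = {}" by (rule TrC[OF TTr])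
      have TnS: "T \<notin> S" using v(2) vT unfolding V_def by blast
      have exC: "set vs \<inter> C \<noteq> {}"
      proof
        assume "set vs \<inter> C = {}"
        hence "is_cyc F vs es" unfolding F_def by (rule cyc_delete[OF q(1)])
        thus False using acF has_cycle_iff by blast
      qed
      define n where "n = length vs"
      obtain ia where ia: "ia < n" "vs ! ia \<in> C" using exC unfolding n_def by (metis disjoint_iff in_set_conv_nth)
      obtain ib where ib: "ib < n" "vs ! ib = v" using v(1) unfolding n_def by (metis in_set_conv_nth)
      have iaT: "vs ! ia \<notin> T" using ia(2) TC by blast
      obtain i where i: "i < n" "vs ! i \<in> T" "vs ! (Suc i mod n) \<notin> T"
        using crossing[of ib n ia "\<lambda>k. vs ! k \<in> T"] ib ia iaT vT by auto
      obtain j where j: "j < n" "vs ! j \<notin> T" "vs ! (Suc j mod n) \<in> T"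
        using crossing[of ia n ib "\<lambda>k. vs ! k \<notin> T"] ib ia iaT vT by auto
      have ij: "i \<noteq> j" using i j by blast
      have sucn: "Suc k mod n < n" if "k < n" for k using that by simp
      have inset: "vs ! k \<in> set vs" if "k < n" for k using that unfolding n_def by simp
      have ei: "es ! i \<in> edges H" "ends H (es ! i) = {vs ! i, vs ! (Suc i mod n)}"
        using cyc_edge(1,2)[OF q(1) i(1)[unfolded n_def]] unfolding n_def by auto
      have ej: "es ! j \<in> edges H" "ends H (es ! j) = {vs ! j, vs ! (Suc j mod n)}"
        using cyc_edge(1,2)[OF q(1) j(1)[unfolded n_def]] unfolding n_def by auto
      have les: "length es = n" "distinct es" using cyc_edge(3,4)[OF q(1) i(1)[unfolded n_def]] unfolding n_def by auto
      have eij: "es ! i \<noteq> es ! j" using les ij i(1) j(1) by (simp add: nth_eq_iff_index_eq)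
      define c1 where "c1 = vs ! (Suc i mod n)"
      define p1 where "p1 = vs ! i"
      define c2 where "c2 = vs ! j"
      define p2 where "p2 = vs ! (Suc j mod n)"
      have c1C: "c1 \<in> C"
      proof (rule ccontr)
        assume nc: "c1 \<notin> C"
        have p1C: "p1 \<notin> C" using i(2) TC unfolding p1_def by blast
        have eF: "es ! i \<in> edges F" using ei nc p1C unfolding F_def c1_def p1_def by auto
        have c1F: "c1 \<in> verts F" using nc inset[OF sucn[OF i(1)]] qV unfolding F_def c1_def by auto
        have A1: "p1 \<in> compof F v" using i(2) unfolding T_def p1_def .
        have A3: "p1 \<in> ends F (es ! i)" "c1 \<in> ends F (es ! i)" using ei(2) unfolding F_def p1_def c1_def by auto
        have "c1 \<in> compof F v" by (rule reach_step[OF A1 eF A3(1) A3(2) c1F])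
        thus False using i(3) unfolding c1_def T_def by simp
      qed
      have c2C: "c2 \<in> C"
      proof (rule ccontr)
        assume nc: "c2 \<notin> C"
        have p2C: "p2 \<notin> C" using j(3) TC unfolding p2_def by blast
        have eF: "es ! j \<in> edges F" using ej nc p2C unfolding F_def c2_def p2_def by auto
        have c2F: "c2 \<in> verts F" using nc inset[OF j(1)] qV unfolding F_def c2_def by auto
        have A1: "p2 \<in> compof F v" using j(3) unfolding T_def p2_def .
        have A3: "p2 \<in> ends F (es ! j)" "c2 \<in> ends F (es ! j)" using ej(2) unfolding F_def p2_def c2_def by auto
        have "c2 \<in> compof F v" by (rule reach_step[OF A1 eF A3(1) A3(2) c2F])
        thus False using j(2) unfolding c2_def T_def by simp
      qed
      have E1: "ends H (es ! i) = {c1, p1}" using ei(2) unfolding c1_def p1_def by (simp add: insert_commute)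
      have E2: "ends H (es ! j) = {c2, p2}" using ej(2) unfolding c2_def p2_def by simp
      have p1T: "p1 \<in> T" using i(2) unfolding p1_def .
      have p2T: "p2 \<in> T" using j(3) unfolding p2_def .
      have attT: "att H T c1 c2" unfolding att_def
        using ei(1) ej(1) eij p1T p2T E1 E2 by blast
      have c1K: "c1 \<in> K" using inset[OF sucn[OF i(1)]] q(2) unfolding c1_def by blast
      have c2K: "c2 \<in> K" using inset[OF j(1)] q(2) unfolding c2_def by blast
      have c1Y: "c1 \<notin> Y" using inset[OF sucn[OF i(1)]] qY unfolding c1_def by blast
      have c2Y: "c2 \<notin> Y" using inset[OF j(1)] qY unfolding c2_def by blast
      define P where "P = {c1, c2}"
      have PP: "P \<in> PP" unfolding PP_def P_def using c1C c2C by blast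
      have TA: "T \<in> A P" unfolding A_def P_def using TTr attT by blast
      have TnB: "T \<notin> B P" using TnS PP unfolding S_def by blast
      have cardB: "card (B P) = N P"
      proof (cases "card (A P) \<le> N P")
        case True
        hence "card (B P) = card (A P)" using Bc[of P] by simp
        hence "B P = A P" using card_subset_eq[OF finA BA] by blast
        thus ?thesis using TA TnB by blast
      next
        case False thus ?thesis using Bc[of P] by simp
      qed
      have someP: "(SOME x. x \<in> P) \<in> P" unfolding P_def by (rule someI[of _ c1]) simp
      have PK: "P \<subseteq> K" using c1K c2K unfolding P_def by blast
      have NP: "N P = card (C \<inter> K) + card P - 1"
      proof -
        have "(SOME x. x \<in> P) \<in> K" using someP PK by blast
        hence "K = compof H (SOME x. x \<in> P)" by (rule comp_eq[OF K(1)])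
        thus ?thesis unfolding N_def by simp
      qed
      define Fr where "Fr = {T' \<in> B P. T' \<inter> Y = {}}"
      define hit where "hit = B P - Fr"
      have finB: "finite (B P)" using finite_subset[OF BA finA] .
      have FrB: "Fr \<subseteq> B P" unfolding Fr_def by blast
      have finFr: "finite Fr" using finite_subset[OF FrB finB] .
      have BTr: "T' \<in> Tr" if "T' \<in> B P" for T' using that BA unfolding A_def by blast
      have hitK: "card hit \<le> card (Y \<inter> K)"
      proof -
        define g where "g T' = (SOME y. y \<in> T' \<inter> Y)" for T'
        have gin: "g T' \<in> T' \<inter> Y" if "T' \<in> hit" for T'
        proof -
          have "T' \<inter> Y \<noteq> {}" using that unfolding hit_def Fr_def by blast
          then obtain y where "y \<in> T' \<inter> Y" by blast
          thus ?thesis unfolding g_def by (rule someI)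
        qed
        have hitTr: "T' \<in> Tr" if "T' \<in> hit" for T' using that BTr unfolding hit_def by blast
        have hitK': "T' \<subseteq> K" if "T' \<in> hit" for T'
        proof -
          have "T' \<in> A P" using that BA unfolding hit_def by blast
          then obtain c d where cd: "P = {c, d}" "att H T' c d" unfolding A_def by blast
          have sub: "T' \<subseteq> compof H c" using att_comp(1)[OF wfH hitTr[OF that, unfolded Tr_def F_def] cd(2)] .
          have "c \<in> K" using cd(1) PK by blast
          hence "K = compof H c" by (rule comp_eq[OF K(1)])
          thus ?thesis using sub by simp
        qed
        have "inj_on g hit"
        proof (rule inj_onI)
          fix T1 T2 assume a: "T1 \<in> hit" "T2 \<in> hit" "g T1 = g T2"
          have m: "g T1 \<in> T1" "g T1 \<in> T2" using gin[OF a(1)] gin[OF a(2)] a(3) by auto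
          show "T1 = T2" by (rule comp_disj[OF hitTr[OF a(1), unfolded Tr_def] hitTr[OF a(2), unfolded Tr_def] m])
        qed
        moreover have "g ` hit \<subseteq> Y \<inter> K" using gin hitK' by blast
        moreover have "finite (Y \<inter> K)" using finite_subset[OF YH fvH] by simp
        ultimately show ?thesis by (rule card_inj_on_le)
      qed
      have cardFr: "card P \<le> card Fr"
      proof -
        have h1: "card hit = card (B P) - card Fr" unfolding hit_def by (rule card_Diff_subset[OF finFr FrB])
        have h2: "card Fr \<le> card (B P)" by (rule card_mono[OF finB FrB])
        have h3: "card (Y \<inter> K) + 1 \<le> card (C \<inter> K)" using K(2) by simp
        have h4: "1 \<le> card P" unfolding P_def by (cases "c1 = c2") auto
        show ?thesis using h1 h2 h3 h4 hitK cardB NP by arith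
      qed
      have FrTr: "T' \<in> Tr" if "T' \<in> Fr" for T' using that FrB BTr by blast
      have FrY: "T' \<inter> Y = {}" if "T' \<in> Fr" for T' using that unfolding Fr_def by blast
      have FrV: "T' \<subseteq> V" if "T' \<in> Fr" for T'
      proof -
        have "T' \<in> S" using that FrB PP unfolding S_def by blast
        thus ?thesis unfolding V_def by blast
      qed
      have getatt: "att H T' c1 c2" if "T' \<in> Fr" for T'
      proof -
        have "T' \<in> A P" using that FrB BA by blast
        then obtain c d where cd: "P = {c, d}" "att H T' c d" unfolding A_def by blast
        have "(c = c1 \<and> d = c2) \<or> (c = c2 \<and> d = c1)" using cd(1) unfolding P_def doubleton_eq_iff by blast
        thus ?thesis using cd(2) by (metis att_sym)
      qed
      show False
      proof (cases "c1 = c2")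
        case True
        have "card P = 1" unfolding P_def using True by simp
        hence "Fr \<noteq> {}" using cardFr by auto
        then obtain Ta where Ta: "Ta \<in> Fr" by blast
        have "att H Ta c1 c1" using getatt[OF Ta] True by simp
        then obtain ws fs where w: "is_cyc H ws fs" "set ws \<subseteq> insert c1 Ta"
          using loop_cycle[OF wfH CV FrTr[OF Ta, unfolded Tr_def F_def] c1C] by blast
        have "set ws \<subseteq> V" using w(2) FrV[OF Ta] c1C unfolding V_def by blast
        moreover have "set ws \<inter> Y = {}" using w(2) FrY[OF Ta] c1Y by blast
        ultimately have "has_cycle (delete_verts H' Y)" by (rule noQ[OF w(1)])
        thus False using acY by simp
      next
        case False
        have "card P = 2" unfolding P_def using False by simp
        hence c2: "2 \<le> card Fr" using cardFr by simp
        hence "Fr \<noteq> {}" by auto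
        then obtain Ta where Ta: "Ta \<in> Fr" by blast
        have "card (Fr - {Ta}) = card Fr - 1" using Ta finFr by simp
        hence "1 \<le> card (Fr - {Ta})" using c2 by linarith
        hence "Fr - {Ta} \<noteq> {}" by (metis card.empty not_one_le_zero)
        then obtain Tb where Tb': "Tb \<in> Fr - {Ta}" by blast
        have Tb: "Tb \<in> Fr" "Tb \<noteq> Ta" using Tb' by auto
        have dj: "Ta \<inter> Tb = {}"
        proof (rule ccontr)
          assume "Ta \<inter> Tb \<noteq> {}"
          then obtain x where x: "x \<in> Ta" "x \<in> Tb" by blast
          have "Ta = Tb" by (rule comp_disj[OF FrTr[OF Ta, unfolded Tr_def] FrTr[OF Tb(1), unfolded Tr_def] x])
          thus False using Tb(2) by simp
        qed
        obtain ws fs where w: "is_cyc H ws fs" "set ws \<subseteq> {c1, c2} \<union> Ta \<union> Tb"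
          using pair_cycle[OF wfH CV FrTr[OF Ta, unfolded Tr_def F_def] FrTr[OF Tb(1), unfolded Tr_def F_def]
              dj False c1C c2C getatt[OF Ta] getatt[OF Tb(1)]] by blast
        have "set ws \<subseteq> V" using w(2) FrV[OF Ta] FrV[OF Tb(1)] c1C c2C unfolding V_def by blast
        moreover have "set ws \<inter> Y = {}" using w(2) FrY[OF Ta] FrY[OF Tb(1)] c1Y c2Y by blast
        ultimately have "has_cycle (delete_verts H' Y)" by (rule noQ[OF w(1)])
        thus False using acY by simp
      qed
    qed
  qed
  have isC': "is_fvs H' C"
  proof -
    { assume "has_cycle (delete_verts H' C)"
      then obtain vs es where c: "is_cyc (delete_verts H' C) vs es" using has_cycle_iff by blast
      have c1: "is_cyc H' vs es" "set vs \<inter> C = {}" using cyc_from_delete[OF c] by auto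
      have "is_cyc H vs es" using cyc_from_induce(1)[OF c1(1)[unfolded H'_def] VV] .
      hence "is_cyc F vs es" unfolding F_def using cyc_delete c1(2) by blast
      hence False using acF has_cycle_iff by blast }
    moreover have "C \<subseteq> verts H'" unfolding H'_def V_def by simp
    ultimately show ?thesis unfolding is_fvs_def acyclic_mg_def by blast
  qed
  have minH': "min_fvs H' C"
  proof -
    have "fvs H' \<le> card C" using fvs_le[OF isC'] .
    moreover obtain Z where "is_fvs H' Z" "card Z = fvs H'" using fvs_ex[OF isC'] by blast
    ultimately show ?thesis using mainclaim isC' unfolding min_fvs_def by fastforce
  qed
  have sub1: "subgraph H' H" unfolding subgraph_def H'_def using wfH' VV H'_def by auto
  have sub2: "subgraph H' G" using sub1 subH unfolding subgraph_def by auto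
  have cert: "certificate G C H'" using sub2 minH' by (simp add: certificate_def)
  have ord: "cert_order H' C z"
    unfolding cert_order_def
  proof
    fix K' assume K': "K' \<in> components H'"
    have f: "fvs (induce H' K') = card (C \<inter> K')" by (rule min_fvs_comp[OF wfH' minH' K'])
    obtain u where u: "u \<in> verts H'" "K' = compof H' u" using K' unfolding components_eq by blast
    have uH: "u \<in> verts H" using u VV unfolding H'_def by auto
    have "K' \<subseteq> compof H u"
    proof
      fix x assume "x \<in> K'"
      hence x: "x \<in> V" "(adj (induce H V))\<^sup>*\<^sup>* u x" using u unfolding compof_def H'_def by auto
      have "(adj H)\<^sup>*\<^sup>* u x" using x(2) by (rule adj_mono[rotated 2]) auto
      thus "x \<in> compof H u" using x(1) VV unfolding compof_def by blast
    qed
    hence "card (C \<inter> K') \<le> card (C \<inter> compof H u)" by (intro card_mono) (use finC in auto)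
    also have "\<dots> \<le> z" using co[OF compof_in[OF uH]] by blast
    finally show "fvs (induce H' K') = card (C \<inter> K') \<and> card (C \<inter> K') \<le> z" using f by blast
  qed
  have cnt1: "components (delete_verts H' C) \<subseteq> S"
  proof
    fix K'' assume K'': "K'' \<in> components (delete_verts H' C)"
    obtain u where u: "u \<in> V - C" "K'' = compof (delete_verts H' C) u"
      using K'' unfolding components_eq H'_def by auto
    obtain T where T: "T \<in> S" "u \<in> T" using u(1) unfolding V_def by blast
    have TT: "T \<in> Tr" using T STr by blast
    have Tu: "T = compof F u" using comp_eq[OF TT[unfolded Tr_def] T(2)] .
    have TV': "T \<subseteq> V" using T unfolding V_def by blast
    have TC: "T \<inter> C = {}" using TrC[OF TT] .
    have fwd: "(adj (delete_verts H' C))\<^sup>*\<^sup>* u x" if xx: "(adj F)\<^sup>*\<^sup>* u x" for x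
      using xx
    proof (induction rule: rtranclp_induct)
      case base show ?case by simp
    next
      case (step y w)
      obtain e where e: "e \<in> edges F" "y \<in> ends H e" "w \<in> ends H e"
        using step(2) unfolding adj_def F_def by auto
      have eV: "ends H e \<subseteq> verts F" using e(1) wfF unfolding wf_mgraph_def F_def by auto
      have yc: "y \<in> compof F u" using step(1) eV e(2) unfolding compof_def by auto
      have "ends H e \<subseteq> compof F u"
      proof
        fix q assume "q \<in> ends H e"
        thus "q \<in> compof F u" using reach_step[OF yc e(1)] e(2) eV by (auto simp: F_def)
      qed
      hence "ends H e \<subseteq> V" using Tu TV' by blast
      moreover have "ends H e \<inter> C = {}" using e(1) unfolding F_def by simp
      moreover have "e \<in> edges H" using e(1) unfolding F_def by simp
      ultimately have "e \<in> edges (delete_verts H' C)" unfolding H'_def by simp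
      hence "adj (delete_verts H' C) y w" using e(2,3) unfolding adj_def H'_def by auto
      with step(3) show ?case by (rule rtranclp.rtrancl_into_rtrancl)
    qed
    have "compof (delete_verts H' C) u = T"
    proof
      show "compof (delete_verts H' C) u \<subseteq> T"
      proof
        fix x assume "x \<in> compof (delete_verts H' C) u"
        hence x: "x \<in> V - C" "(adj (delete_verts (induce H V) C))\<^sup>*\<^sup>* u x"
          unfolding compof_def H'_def by auto
        have "(adj F)\<^sup>*\<^sup>* u x" using x(2) unfolding F_def by (rule adj_mono[rotated 2]) auto
        thus "x \<in> T" using x(1) VV Tu unfolding compof_def F_def by auto
      qed
      show "T \<subseteq> compof (delete_verts H' C) u"
      proof
        fix x assume x: "x \<in> T"
        hence "(adj F)\<^sup>*\<^sup>* u x" using Tu unfolding compof_def by blast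
        hence "(adj (delete_verts H' C))\<^sup>*\<^sup>* u x" by (rule fwd)
        moreover have "x \<in> V - C" using x TV' TC by blast
        ultimately show "x \<in> compof (delete_verts H' C) u" unfolding compof_def H'_def by simp
      qed
    qed
    thus "K'' \<in> S" using u(2) T(1) by simp
  qed
  have bound: "(\<Sum>P\<in>PP. real (card (B P))) \<le> real (card C) / 2 * ((real z)\<^sup>2 + 2 * real z - 1)"
  proof -
    define f where "f P = real (card (B P))" for P
    have PPC: "P \<subseteq> C" "P \<noteq> {}" "finite P" if "P \<in> PP" for P
      using that finC unfolding PP_def by auto
    have s1: "(\<Sum>c\<in>C. if c \<in> P then f P / real (card P) else 0) = f P" if P: "P \<in> PP" for P
    proof -
      have "(\<Sum>c\<in>C. if c \<in> P then f P / real (card P) else 0) = (\<Sum>c\<in>{c\<in>C. c \<in> P}. f P / real (card P))"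
        using sum.inter_filter[OF finC, of "\<lambda>_. f P / real (card P)" "\<lambda>c. c \<in> P"] by simp
      also have "{c\<in>C. c \<in> P} = P" using PPC[OF P] by blast
      also have "(\<Sum>c\<in>P. f P / real (card P)) = f P" using PPC[OF P] by simp
      finally show ?thesis .
    qed
    have "(\<Sum>P\<in>PP. f P) = (\<Sum>P\<in>PP. \<Sum>c\<in>C. if c \<in> P then f P / real (card P) else 0)"
      using s1 by (intro sum.cong) auto
    also have "\<dots> = (\<Sum>c\<in>C. \<Sum>P\<in>PP. if c \<in> P then f P / real (card P) else 0)" by (rule sum.swap)
    also have "\<dots> \<le> (\<Sum>c\<in>C. ((real z)\<^sup>2 + 2 * real z - 1) / 2)"
    proof (rule sum_mono)
      fix c assume c: "c \<in> C"
      define k where "k = card (C \<inter> compof H c)"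
      have cV: "c \<in> verts H" using c CV by blast
      have kz: "k \<le> z" using co[OF compof_in[OF cV]] unfolding k_def by blast
      have cin: "c \<in> C \<inter> compof H c" using c compof_self[OF cV] by blast
      have fk: "finite (C \<inter> compof H c)" using finC by simp
      have k1: "1 \<le> k" unfolding k_def using card_0_eq[OF fk] cin by fastforce
      have eqset: "{P\<in>PP. c \<in> P} = insert {c} ((\<lambda>d. {c, d}) ` (C - {c}))"
      proof
        show "{P\<in>PP. c \<in> P} \<subseteq> insert {c} ((\<lambda>d. {c, d}) ` (C - {c}))"
        proof
          fix P assume "P \<in> {P\<in>PP. c \<in> P}"
          then obtain a b where ab: "a \<in> C" "b \<in> C" "P = {a, b}" "c \<in> P" unfolding PP_def by blast
          show "P \<in> insert {c} ((\<lambda>d. {c, d}) ` (C - {c}))"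
          proof (cases "a = b")
            case True thus ?thesis using ab by auto
          next
            case False
            hence "(c = a \<and> P = {c, b} \<and> b \<noteq> c) \<or> (c = b \<and> P = {c, a} \<and> a \<noteq> c)" using ab by auto
            thus ?thesis using ab by auto
          qed
        qed
        show "insert {c} ((\<lambda>d. {c, d}) ` (C - {c})) \<subseteq> {P\<in>PP. c \<in> P}"
          using c unfolding PP_def by auto
      qed
      have notin: "{c} \<notin> (\<lambda>d. {c, d}) ` (C - {c})" by auto
      have inj: "inj_on (\<lambda>d. {c, d}) (C - {c})" unfolding inj_on_def by auto
      have "(\<Sum>P\<in>PP. if c \<in> P then f P / real (card P) else 0) = (\<Sum>P\<in>{P\<in>PP. c \<in> P}. f P / real (card P))"
        using sum.inter_filter[OF finPP, of "\<lambda>P. f P / real (card P)" "\<lambda>P. c \<in> P"] by simp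
      also have "\<dots> = f {c} / real (card {c}) + (\<Sum>P\<in>(\<lambda>d. {c, d}) ` (C - {c}). f P / real (card P))"
        unfolding eqset using notin finC by (simp add: sum.insert)
      also have "(\<Sum>P\<in>(\<lambda>d. {c, d}) ` (C - {c}). f P / real (card P)) = (\<Sum>d\<in>C - {c}. f {c, d} / real (card {c, d}))"
        using sum.reindex[OF inj] by simp
      also have "\<dots> = (\<Sum>d\<in>C - {c}. f {c, d} / 2)" by (intro sum.cong) auto
      finally have E: "(\<Sum>P\<in>PP. if c \<in> P then f P / real (card P) else 0) = f {c} + (\<Sum>d\<in>C - {c}. f {c, d} / 2)"
        by simp
      have fc: "f {c} \<le> real k"
      proof -
        have "card (B {c}) \<le> N {c}" using Bc[of "{c}"] by simp
        also have "N {c} = k" unfolding N_def k_def by simp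
        finally show ?thesis unfolding f_def by simp
      qed
      have fcd: "f {c, d} / 2 \<le> (if d \<in> compof H c then (real k + 1) / 2 else 0)" if d: "d \<in> C - {c}" for d
      proof (cases "B {c, d} = {}")
        case True thus ?thesis unfolding f_def by simp
      next
        case False
        then obtain T where "T \<in> B {c, d}" by blast
        hence "T \<in> A {c, d}" using BA by blast
        then obtain c' d' where T: "T \<in> Tr" "{c, d} = {c', d'}" "att H T c' d'" unfolding A_def by blast
        have dc': "d' \<in> compof H c'" using att_comp(2)[OF wfH T(1)[unfolded Tr_def F_def] T(3)] .
        have dV: "d \<in> verts H" using d CV by blast
        have dc: "d \<in> compof H c"
        proof -
          have "(c' = c \<and> d' = d) \<or> (c' = d \<and> d' = c)" using T(2) unfolding doubleton_eq_iff by blast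
          thus ?thesis
          proof
            assume "c' = c \<and> d' = d" thus ?thesis using dc' by simp
          next
            assume h: "c' = d \<and> d' = c"
            hence "c \<in> compof H d" using dc' by simp
            hence "compof H c = compof H d" by (rule compof_eq)
            thus ?thesis using compof_self[OF dV] by simp
          qed
        qed
        have ceq: "compof H d = compof H c" using compof_eq[OF dc] .
        have "(SOME x. x \<in> {c, d}) \<in> {c, d}" by (rule someI[of _ c]) simp
        hence "(SOME x. x \<in> {c, d}) = c \<or> (SOME x. x \<in> {c, d}) = d" by blast
        hence "compof H (SOME x. x \<in> {c, d}) = compof H c" using ceq by (elim disjE) simp_all
        moreover have "card {c, d} = 2" using d by auto
        ultimately have "N {c, d} = k + 1" unfolding N_def k_def by simp
        hence "card (B {c, d}) \<le> k + 1" using Bc[of "{c, d}"] by simp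
        hence "f {c, d} \<le> real k + 1" unfolding f_def by simp
        thus ?thesis using dc by simp
      qed
      have "(\<Sum>d\<in>C - {c}. f {c, d} / 2) \<le> (\<Sum>d\<in>C - {c}. if d \<in> compof H c then (real k + 1) / 2 else 0)"
        using fcd by (rule sum_mono)
      also have "\<dots> = (\<Sum>d\<in>{d\<in>C - {c}. d \<in> compof H c}. (real k + 1) / 2)"
        using sum.inter_filter[of "C - {c}" "\<lambda>_. (real k + 1) / 2" "\<lambda>d. d \<in> compof H c"] finC by simp
      also have "\<dots> = real (card {d\<in>C - {c}. d \<in> compof H c}) * ((real k + 1) / 2)" by simp
      also have "{d\<in>C - {c}. d \<in> compof H c} = (C \<inter> compof H c) - {c}" by blast
      also have "card ((C \<inter> compof H c) - {c}) = k - 1" unfolding k_def using cin fk by simp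
      finally have S2: "(\<Sum>d\<in>C - {c}. f {c, d} / 2) \<le> real (k - 1) * ((real k + 1) / 2)" .
      have rk: "real (k - 1) = real k - 1" using k1 by simp
      have sq: "real k * real k \<le> real z * real z" using kz by (intro mult_mono) auto
      have "f {c} + (\<Sum>d\<in>C - {c}. f {c, d} / 2) \<le> real k + (real k - 1) * ((real k + 1) / 2)"
        using fc S2 rk by simp
      also have "\<dots> = (real k * real k + 2 * real k - 1) / 2" by (simp add: field_simps)
      also have "\<dots> \<le> (real z * real z + 2 * real z - 1) / 2" using sq kz by simp
      finally show "(\<Sum>P\<in>PP. if c \<in> P then f P / real (card P) else 0) \<le> ((real z)\<^sup>2 + 2 * real z - 1) / 2"
        using E by (simp add: power2_eq_square)
    qed
    also have "\<dots> = real (card C) / 2 * ((real z)\<^sup>2 + 2 * real z - 1)" by simp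
    finally show ?thesis unfolding f_def .
  qed
  define X where "X = {T \<in> components (delete_verts H' C). acyclic_mg (induce (delete_verts H' C) T)}"
  have XS: "X \<subseteq> S" unfolding X_def using cnt1 by blast
  have c1: "card X \<le> card S" by (rule card_mono[OF finS XS])
  have c2: "card S \<le> (\<Sum>P\<in>PP. card (B P))" unfolding S_def by (rule card_UN_le[OF finPP])
  have "card X \<le> (\<Sum>P\<in>PP. card (B P))" using c1 c2 by (rule le_trans)
  hence "real (card X) \<le> (\<Sum>P\<in>PP. real (card (B P)))" by (simp only: of_nat_sum[symmetric] of_nat_le_iff)
  hence R: "real (card X) \<le> real (card C) / 2 * ((real z)\<^sup>2 + 2 * real z - 1)" using bound by (rule order_trans)
  show ?thesis using sub1 cert ord R unfolding X_def by (intro exI[of _ H'] conjI)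
qed

end
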